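(* Let $b\ge1$ be an integer, $t\ge0$ an integer and $d=2t+1$. Let $\nu^{\text{on-diag}}$ be the number of pairs $(k,q)$ with $k$ odd, $1\le k<d$, $0\le q\le k$, $q\equiv0\pmod{2b}$. Then $\nu^{\text{on-diag}}=\tfrac{t^2}{2b}+\tfrac{t}{2}+c$, where $c=\tfrac{1}{2b}[t]_b\big([t]_b-2[t-\tfrac12]_b+b-1\big)$, and $0\le c\le b$.
   Context: For real $x$ and positive integer $y$, $[x]_y:=x\bmod y=x-y\lfloor x/y\rfloor$. *)

theory Defs
  imports Complex_Main
begin

definition rmod :: "real \<Rightarrow> nat \<Rightarrow> real" where
  "rmod x y = x - real y * of_int \<lfloor>x / real y\<rfloor>"

end

theory Submission
  imports Defs
begin

lemma card_Q:
  assumes "b \<ge> (1::nat)"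
  shows "card {q::nat. q \<le> k \<and> (2*b) dvd q} = k div (2*b) + 1"
proof -
  have p: "2*b > 0" using assms by simp
  have "{q::nat. q \<le> k \<and> (2*b) dvd q} = (\<lambda>i. 2*b*i) ` {..k div (2*b)}"
  proof (rule set_eqI, rule iffI)
    fix q assume "q \<in> {q::nat. q \<le> k \<and> (2*b) dvd q}"
    then obtain i where "q = 2*b*i" "2*b*i \<le> k" by auto
    moreover have "i \<le> k div (2*b)" using calculation(2)
      by (subst less_eq_div_iff_mult_less_eq[OF p]) (simp add: mult.commute)
    ultimately show "q \<in> (\<lambda>i. 2*b*i) ` {..k div (2*b)}" by auto
  next
    fix q assume "q \<in> (\<lambda>i. 2*b*i) ` {..k div (2*b)}"
    then obtain i where "q = 2*b*i" "i \<le> k div (2*b)" by auto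
    moreover have "i*(2*b) \<le> k" using calculation(2) less_eq_div_iff_mult_less_eq[OF p] by blast
    then have "2*b*i \<le> k" by (simp add: mult.commute)
    ultimately show "q \<in> {q::nat. q \<le> k \<and> (2*b) dvd q}" by auto
  qed
  moreover have "inj_on (\<lambda>i. 2*b*i) {..k div (2*b)}" using assms by (auto simp: inj_on_def)
  ultimately show ?thesis by (simp add: card_image)
qed

definition SS :: "nat \<Rightarrow> nat \<Rightarrow> (nat \<times> nat) set" where
  "SS b t = {(k::nat, q::nat). odd k \<and> 1 \<le> k \<and> k < 2*t+1 \<and> q \<le> k \<and> (2 * b) dvd q}"

lemma SS_Suc: "SS b (Suc t) = SS b t \<union> ({2*t+1} \<times> {q. q \<le> 2*t+1 \<and> (2*b) dvd q})"
proof -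
  have h: "odd k \<Longrightarrow> (k < 2*Suc t+1) = (k < 2*t+1 \<or> k = 2*t+1)" for k :: nat by presburger
  show ?thesis unfolding SS_def using h by auto
qed

lemma SS_fin: "finite (SS b t)"
proof -
  have "SS b t \<subseteq> {..2*t} \<times> {..2*t}" unfolding SS_def by auto
  then show ?thesis by (rule finite_subset) auto
qed

lemma div_odd: "b \<ge> (1::nat) \<Longrightarrow> (2*t+1) div (2*b) = t div b"
proof -
  have "(2*t+1) div (2*b) = (2*t+1) div 2 div b" by (simp add: div_mult2_eq)
  also have "(2*t+1) div 2 = t" by simp
  finally show ?thesis .
qed

lemma arith1:
  fixes B M R :: real assumes "B > 0"
  shows "(M*B+R)^2/(2*B) + (M*B+R)/2 + R*(B-R)/(2*B) + M + 1 = (M*B+R+1)^2/(2*B) + (M*B+R+1)/2 + (R+1)*(B-(R+1))/(2*B)"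
  using assms by (simp add: field_simps power2_eq_square)

lemma arith2:
  fixes B M R :: real assumes "B > 0" "B = R + 1"
  shows "(M*B+R)^2/(2*B) + (M*B+R)/2 + R*(B-R)/(2*B) + M + 1 = (M*B+R+1)^2/(2*B) + (M*B+R+1)/2 + 0*(B-0)/(2*B)"
proof -
  have p: "(M*B+R)^2 + B*(M*B+R) + R*(B-R) + 2*B*(M+1) = (M*B+R+1)^2 + B*(M*B+R+1)"
    unfolding assms(2) by (simp add: power2_eq_square algebra_simps)
  have "(M*B+R)^2/(2*B) + (M*B+R)/2 + R*(B-R)/(2*B) + M + 1 = ((M*B+R)^2 + B*(M*B+R) + R*(B-R) + 2*B*(M+1))/(2*B)"
    using assms(1) by (simp add: field_simps)
  also have "\<dots> = ((M*B+R+1)^2 + B*(M*B+R+1))/(2*B)" using p by simp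
  also have "\<dots> = (M*B+R+1)^2/(2*B) + (M*B+R+1)/2 + 0*(B-0)/(2*B)"
    using assms(1) by (simp add: field_simps)
  finally show ?thesis .
qed

lemma card_SS:
  assumes "b \<ge> (1::nat)"
  shows "real (card (SS b t)) = (real t)^2 / (2 * real b) + real t / 2
           + real (t mod b) * (real b - real (t mod b)) / (2 * real b)"
proof (induction t)
  case 0
  have "SS b 0 = {}" unfolding SS_def by auto
  then show ?case by simp
next
  case (Suc t)
  have disj: "SS b t \<inter> ({2*t+1} \<times> {q. q \<le> 2*t+1 \<and> (2*b) dvd q}) = {}"
    unfolding SS_def by auto
  have fin2: "finite ({2*t+1} \<times> {q. q \<le> 2*t+1 \<and> (2*b) dvd q})" by auto
  have "card (SS b (Suc t)) = card (SS b t) + (t div b + 1)"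
    unfolding SS_Suc using card_Un_disjoint[OF SS_fin fin2 disj] card_Q[OF assms] div_odd[OF assms]
    by (simp add: card_cartesian_product)
  then have e: "real (card (SS b (Suc t))) = real (card (SS b t)) + real (t div b) + 1" by simp
  define m where "m = t div b"
  define r where "r = t mod b"
  have tm: "t = m*b + r" unfolding m_def r_def by simp
  have rb: "r < b" unfolding r_def using assms by simp
  have bp: "real b > 0" using assms by simp
  have IH: "real (card (SS b t)) = (real m * real b + real r)^2 / (2 * real b) + (real m * real b + real r) / 2
           + real r * (real b - real r) / (2 * real b)"
    using Suc.IH unfolding r_def[symmetric] by (simp add: tm)
  have e2: "real (card (SS b (Suc t))) = real (card (SS b t)) + real m + 1" using e m_def by simp
  have st: "real (Suc t) = real m * real b + real r + 1" using tm by simp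
  show ?case
  proof (cases "r + 1 < b")
    case True
    have "Suc t mod b = r + 1"
      using True unfolding r_def by (simp add: mod_Suc)
    then have hm: "real (Suc t mod b) = real r + 1" by simp
    show ?thesis unfolding e2 IH st hm by (rule arith1[OF bp])
  next
    case False
    then have rr: "r + 1 = b" using rb by simp
    have "Suc t mod b = 0" using rr unfolding r_def by (simp add: mod_Suc)
    then have hm: "real (Suc t mod b) = 0" by simp
    have br: "real b = real r + 1" using rr by simp
    show ?thesis unfolding e2 IH st hm by (rule arith2[OF bp br])
  qed
qed

theorem lemmaS11:
  fixes b t d :: nat and c :: real
  assumes hb: "b \<ge> 1"
    and hd: "d = 2 * t + 1"
    and hc: "c = (1 / (2 * real b)) * rmod (real t) b *
                 (rmod (real t) b - 2 * rmod (real t - 1/2) b + real b - 1)"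
  shows "real (card {(k::nat, q::nat). odd k \<and> 1 \<le> k \<and> k < d \<and> q \<le> k \<and> (2 * b) dvd q})
           = (real t)^2 / (2 * real b) + real t / 2 + c
         \<and> 0 \<le> c \<and> c \<le> real b"
proof -
  define m where "m = t div b"
  define r where "r = t mod b"
  have tm: "t = m*b + r" unfolding m_def r_def by simp
  have rb: "r < b" unfolding r_def using hb by simp
  have bp: "real b > 0" using hb by simp
  have r1: "rmod (real t) b = real r"
  proof -
    have fl: "\<lfloor>real t / real b\<rfloor> = int m" unfolding m_def
      by (rule floor_divide_of_nat_eq)
    have "real t = real m * real b + real r" using tm by simp
    then show ?thesis unfolding rmod_def fl by simp
  qed
  have r2: "rmod (real t - 1/2) b = (if r = 0 then real b - 1/2 else real r - 1/2)"
  proof (cases "r = 0")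
    case True
    have x: "(real t - 1/2) / real b = real m - 1 / (2 * real b)"
      using True tm bp by (simp add: diff_divide_distrib)
    have y: "0 < 1 / (2 * real b)" "1 / (2 * real b) \<le> 1/2" using hb bp by (auto simp: divide_simps)
    have fl: "\<lfloor>(real t - 1/2) / real b\<rfloor> = int m - 1"
      unfolding floor_eq_iff x using y by simp
    have "real t = real m * real b" using True tm by simp
    then show ?thesis unfolding rmod_def fl using True bp by (simp add: algebra_simps)
  next
    case False
    have x: "(real t - 1/2) / real b = real m + (real r - 1/2) / real b"
      using tm bp by (simp add: field_simps)
    have y: "0 \<le> (real r - 1/2) / real b" "(real r - 1/2) / real b < 1"
      using False rb bp by (auto simp: divide_simps)
    have fl: "\<lfloor>(real t - 1/2) / real b\<rfloor> = int m"
      unfolding floor_eq_iff x using y by simp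
    have "real t = real m * real b + real r" using tm by simp
    then show ?thesis unfolding rmod_def fl using False bp by (simp add: algebra_simps)
  qed
  have cc: "c = real r * (real b - real r) / (2 * real b)"
  proof (cases "r = 0")
    case True then show ?thesis unfolding hc r1 by simp
  next
    case False
    then have "c = (1 / (2 * real b)) * real r * (real b - real r)"
      unfolding hc r1 r2 by (simp add: algebra_simps)
    then show ?thesis by simp
  qed
  have set: "{(k::nat, q::nat). odd k \<and> 1 \<le> k \<and> k < d \<and> q \<le> k \<and> (2 * b) dvd q} = SS b t"
    unfolding SS_def hd ..
  have "0 \<le> c" unfolding cc using rb bp by simp
  moreover have "c \<le> real b"
  proof -
    have "real r * (real b - real r) \<le> real b * real b"
      using rb by (intro mult_mono) auto
    moreover have "real b * real b \<le> real b * (2 * real b)" using bp by simp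
    ultimately have h: "real r * (real b - real r) \<le> real b * (2 * real b)" by linarith
    have p: "2 * real b > 0" using bp by simp
    show ?thesis unfolding cc using h by (simp only: pos_divide_le_eq[OF p])
  qed
  moreover have "real (card (SS b t)) = (real t)^2 / (2 * real b) + real t / 2 + c"
    unfolding card_SS[OF hb] cc r_def ..
  ultimately show ?thesis unfolding set by blast
qed

end
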